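(* Let $f\in\mathbb{K}[[\underline{x}]][y]$ be a monic polynomial of degree $n$ which is prepared. Then $F(X_1,\dots,X_e,y)=f(X_1,X_2X_1,\dots,X_eX_1,y)\in\mathbb{K}[[\underline{X}]][y]$ is a quasi-ordinary polynomial.
   Context: $\mathbb{K}$ is an algebraically closed field of characteristic $0$, $\underline{x}=(x_1,\dots,x_e)$, $\underline{X}=(X_1,\dots,X_e)$. Write the $y$-discriminant of $f$ as $\Delta(\underline{x})=\sum_{d\ge0}u_d(\underline{x})$ with $u_d$ homogeneous of degree $d$, and let $a=\min\{d: u_d\neq0\}$. $f$ is called prepared if the coefficient $c_a$ of $x_1^a$ in $u_a$ is nonzero. A monic polynomial in $\mathbb{K}[[\underline{X}]][y]$ is quasi-ordinary if its $y$-discriminant is of the form $\underline{X}^{\alpha}\varepsilon(\underline{X})$ with $\alpha\in\mathbb{N}^e$ and $\varepsilon$ a unit of $\mathbb{K}[[\underline{X}]]$. *)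

theory Defs
  imports "HOL-Library.Poly_Mapping" "Subresultants.Resultant_Prelim"
begin

(* Multivariate formal power series over a commutative ring: coefficient functions on
   monomials x^m, m :: nat =>0 nat (finitely supported exponent vectors, variables indexed by nat).
   K[[x_1,...,x_e]] is the subring of series whose monomials only involve variables 1..e. *)

typedef 'a mps = "UNIV :: ((nat \<Rightarrow>\<^sub>0 nat) \<Rightarrow> 'a) set" morphisms coeff_mps Abs_mps ..
setup_lifting type_definition_mps

definition dv :: "(nat \<Rightarrow>\<^sub>0 nat) \<Rightarrow> (nat \<Rightarrow>\<^sub>0 nat) set" where
  "dv m = {p. \<exists>q. p + q = m}"

lemma finite_dv: "finite (dv m)"
proof -
  let ?B = "\<Union>i\<in>Poly_Mapping.keys m. {0..Poly_Mapping.lookup m i}"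
  have fin: "finite {f. \<forall>x. (x \<in> Poly_Mapping.keys m \<longrightarrow> f x \<in> ?B) \<and> (x \<notin> Poly_Mapping.keys m \<longrightarrow> f x = 0)}"
    by (rule finite_set_of_finite_funs) auto
  have "Poly_Mapping.lookup ` dv m \<subseteq> {f. \<forall>x. (x \<in> Poly_Mapping.keys m \<longrightarrow> f x \<in> ?B) \<and> (x \<notin> Poly_Mapping.keys m \<longrightarrow> f x = 0)}"
  proof
    fix f assume "f \<in> Poly_Mapping.lookup ` dv m"
    then obtain p q where f: "f = Poly_Mapping.lookup p" and pq: "p + q = m" by (auto simp: dv_def)
    have le: "f x \<le> Poly_Mapping.lookup m x" for x using pq f by (auto simp: lookup_add)
    show "f \<in> {f. \<forall>x. (x \<in> Poly_Mapping.keys m \<longrightarrow> f x \<in> ?B) \<and> (x \<notin> Poly_Mapping.keys m \<longrightarrow> f x = 0)}"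
      proof (intro CollectI allI conjI impI)
      fix x assume "x \<in> Poly_Mapping.keys m"
      then show "f x \<in> ?B" using le[of x] by (intro UN_I[of x]) auto
    next
      fix x assume "x \<notin> Poly_Mapping.keys m"
      then show "f x = 0" using le[of x] by (simp add: in_keys_iff)
    qed
  qed
  then have "finite (Poly_Mapping.lookup ` dv m)" using fin finite_subset by blast
  then show ?thesis by (rule finite_imageD) (simp add: inj_on_def poly_mapping_eqI)
qed

lemma dv_trans: "k \<in> dv m \<Longrightarrow> l \<in> dv k \<Longrightarrow> l \<in> dv m"
  by (auto simp: dv_def add.assoc)

lemma dv_right: "k = l + q \<Longrightarrow> q \<in> dv k"
  by (auto simp: dv_def add.commute)
lemma dv_left: "k = l + q \<Longrightarrow> l \<in> dv k"
  by (auto simp: dv_def)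
lemma dv_self: "m \<in> dv m" by (auto simp: dv_def intro: exI[of _ 0])

definition R :: "(nat \<Rightarrow>\<^sub>0 nat) \<Rightarrow> ((nat \<Rightarrow>\<^sub>0 nat) \<Rightarrow> 'a::zero) \<Rightarrow> (nat \<Rightarrow>\<^sub>0 nat) \<Rightarrow> 'a" where
  "R m f k = (if k \<in> dv m then f k else 0)"

lemma finite_R: "finite {k. R m f k \<noteq> 0}"
  by (rule finite_subset[OF _ finite_dv[of m]]) (auto simp: R_def split: if_splits)

lemma prod_fun_R:
  fixes f g :: "(nat \<Rightarrow>\<^sub>0 nat) \<Rightarrow> 'a::semiring_0"
  assumes "k \<in> dv m" shows "prod_fun f g k = prod_fun (R m f) (R m g) k"
  unfolding prod_fun_def
proof (intro arg_cong[where f=Sum_any] ext)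
  fix l
  have inner: "(\<lambda>q. R m g q when k = l + q) = (\<lambda>q. g q when k = l + q)"
    using assms by (auto simp: when_def R_def fun_eq_iff intro: dv_trans dv_right)
  show "f l * (\<Sum>q. g q when k = l + q) = R m f l * (\<Sum>q. R m g q when k = l + q)"
  proof (cases "l \<in> dv k")
    case True
    then have "R m f l = f l" using assms by (simp add: R_def dv_trans)
    then show ?thesis by (simp only: inner)
  next
    case False
    then have "(\<lambda>q. g q when k = l + q) = (\<lambda>q. 0)" by (auto simp: when_def dv_def fun_eq_iff)
    then show ?thesis using inner by (simp only: Sum_any.neutral mult_zero_right)
  qed
qed

lemma prod_fun_local:
  fixes f g :: "(nat \<Rightarrow>\<^sub>0 nat) \<Rightarrow> 'a::semiring_0"
  assumes "\<And>k. k \<in> dv m \<Longrightarrow> f k = f' k" "\<And>k. k \<in> dv m \<Longrightarrow> g k = g' k"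
  shows "prod_fun f g m = prod_fun f' g' m"
proof -
  have "R m f = R m f'" "R m g = R m g'" using assms by (auto simp: R_def fun_eq_iff)
  then show ?thesis using prod_fun_R[OF dv_self, of f g] prod_fun_R[OF dv_self, of f' g'] by simp
qed

lemma lookup_times_pm: "Poly_Mapping.lookup (a * b) = prod_fun (Poly_Mapping.lookup a) (Poly_Mapping.lookup b)"
  by transfer simp

lemma prod_fun_fin_assoc:
  fixes f g h :: "(nat \<Rightarrow>\<^sub>0 nat) \<Rightarrow> 'a::semiring_0"
  assumes "finite {k. f k \<noteq> 0}" "finite {k. g k \<noteq> 0}" "finite {k. h k \<noteq> 0}"
  shows "prod_fun (prod_fun f g) h = prod_fun f (prod_fun g h)"
proof -
  let ?A = "Abs_poly_mapping f" and ?B = "Abs_poly_mapping g" and ?C = "Abs_poly_mapping h"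
  have "Poly_Mapping.lookup (?A * ?B * ?C) = Poly_Mapping.lookup (?A * (?B * ?C))" by (simp add: mult.assoc)
  then show ?thesis using assms by (simp add: lookup_times_pm)
qed

lemma prod_fun_fin_comm:
  fixes f g :: "(nat \<Rightarrow>\<^sub>0 nat) \<Rightarrow> 'a::comm_semiring_0"
  assumes "finite {k. f k \<noteq> 0}" "finite {k. g k \<noteq> 0}"
  shows "prod_fun f g = prod_fun g f"
proof -
  let ?A = "Abs_poly_mapping f" and ?B = "Abs_poly_mapping g"
  have "Poly_Mapping.lookup (?A * ?B) = Poly_Mapping.lookup (?B * ?A)" by (simp add: mult.commute)
  then show ?thesis using assms by (simp add: lookup_times_pm)
qed

lemma prod_fun_fin_distrib:
  fixes f g h :: "(nat \<Rightarrow>\<^sub>0 nat) \<Rightarrow> 'a::semiring_0"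
  assumes "finite {k. f k \<noteq> 0}" "finite {k. g k \<noteq> 0}" "finite {k. h k \<noteq> 0}"
  shows "prod_fun (\<lambda>k. f k + g k) h = (\<lambda>k. prod_fun f h k + prod_fun g h k)"
proof -
  let ?A = "Abs_poly_mapping f" and ?B = "Abs_poly_mapping g" and ?C = "Abs_poly_mapping h"
  have "Poly_Mapping.lookup ((?A + ?B) * ?C) = Poly_Mapping.lookup (?A * ?C + ?B * ?C)" by (simp add: distrib_right)
  moreover have "Poly_Mapping.lookup (?A + ?B) = (\<lambda>k. f k + g k)"
    using assms by (simp add: lookup_add fun_eq_iff)
  ultimately show ?thesis using assms by (simp add: lookup_times_pm lookup_add fun_eq_iff)
qed

lemma prod_fun_one_left:
  fixes f :: "(nat \<Rightarrow>\<^sub>0 nat) \<Rightarrow> 'a::semiring_1"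
  shows "prod_fun (\<lambda>k. 1 when k = 0) f = f"
  by (simp add: prod_fun_def [abs_def] when_mult)

instantiation mps :: (comm_ring_1) comm_ring_1
begin
lift_definition zero_mps :: "'a mps" is "\<lambda>_. 0" .
lift_definition one_mps :: "'a mps" is "\<lambda>k. 1 when k = 0" .
lift_definition plus_mps :: "'a mps \<Rightarrow> 'a mps \<Rightarrow> 'a mps" is "\<lambda>f g k. f k + g k" .
lift_definition minus_mps :: "'a mps \<Rightarrow> 'a mps \<Rightarrow> 'a mps" is "\<lambda>f g k. f k - g k" .
lift_definition uminus_mps :: "'a mps \<Rightarrow> 'a mps" is "\<lambda>f k. - f k" .
lift_definition times_mps :: "'a mps \<Rightarrow> 'a mps \<Rightarrow> 'a mps" is prod_fun .
instance
proof
  fix a b c :: "'a mps"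
  show "a * b * c = a * (b * c)"
  proof (transfer, rule ext)
    fix f g h :: "(nat \<Rightarrow>\<^sub>0 nat) \<Rightarrow> 'a" and m
    have "prod_fun (prod_fun f g) h m = prod_fun (prod_fun (R m f) (R m g)) (R m h) m"
      by (rule prod_fun_local) (auto simp: R_def intro: prod_fun_R)
    also have "\<dots> = prod_fun (R m f) (prod_fun (R m g) (R m h)) m"
      by (simp add: prod_fun_fin_assoc finite_R)
    also have "\<dots> = prod_fun f (prod_fun g h) m"
      by (rule prod_fun_local) (auto simp: R_def intro: prod_fun_R[symmetric])
    finally show "prod_fun (prod_fun f g) h m = prod_fun f (prod_fun g h) m" .
  qed
  show "a * b = b * a"
  proof (transfer, rule ext)
    fix f g :: "(nat \<Rightarrow>\<^sub>0 nat) \<Rightarrow> 'a" and m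
    have "prod_fun f g m = prod_fun (R m f) (R m g) m" by (rule prod_fun_R[OF dv_self])
    also have "\<dots> = prod_fun (R m g) (R m f) m" by (simp add: prod_fun_fin_comm finite_R)
    also have "\<dots> = prod_fun g f m" by (rule prod_fun_R[OF dv_self, symmetric])
    finally show "prod_fun f g m = prod_fun g f m" .
  qed
  show "(a + b) * c = a * c + b * c"
  proof (transfer, rule ext)
    fix f g h :: "(nat \<Rightarrow>\<^sub>0 nat) \<Rightarrow> 'a" and m
    have "prod_fun (\<lambda>k. f k + g k) h m = prod_fun (\<lambda>k. R m f k + R m g k) (R m h) m"
      by (rule prod_fun_local) (auto simp: R_def)
    also have "\<dots> = prod_fun (R m f) (R m h) m + prod_fun (R m g) (R m h) m"
      by (simp add: prod_fun_fin_distrib finite_R)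
    also have "\<dots> = prod_fun f h m + prod_fun g h m"
      by (simp add: prod_fun_R[OF dv_self, symmetric])
    finally show "prod_fun (\<lambda>k. f k + g k) h m = prod_fun f h m + prod_fun g h m" .
  qed
  show "1 * a = a" by transfer (rule prod_fun_one_left)
  show "0 + a = a" by transfer simp
  show "a + b + c = a + (b + c)" by transfer (simp add: add.assoc)
  show "a + b = b + a" by transfer (simp add: add.commute)
  show "- a + a = 0" by transfer simp
  show "a - b = a + - b" by transfer simp
  show "(0::'a mps) \<noteq> 1" by transfer (simp add: fun_eq_iff when_def)
qed
end


definition mdeg :: "(nat \<Rightarrow>\<^sub>0 nat) \<Rightarrow> nat" where
  "mdeg m = (\<Sum>i\<in>Poly_Mapping.keys m. Poly_Mapping.lookup m i)"

definition series_in :: "nat \<Rightarrow> 'a::zero mps \<Rightarrow> bool" where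
  "series_in e g \<longleftrightarrow> (\<forall>m. coeff_mps g m \<noteq> 0 \<longrightarrow> Poly_Mapping.keys m \<subseteq> {1..e})"

definition poly_over_series :: "nat \<Rightarrow> 'a::comm_ring_1 mps poly \<Rightarrow> bool" where
  "poly_over_series e f \<longleftrightarrow> (\<forall>i. series_in e (coeff f i))"

definition mono_mps :: "(nat \<Rightarrow>\<^sub>0 nat) \<Rightarrow> 'a::{zero,one} mps" where
  "mono_mps \<alpha> = Abs_mps (\<lambda>k. if k = \<alpha> then 1 else 0)"

definition hom_part :: "nat \<Rightarrow> 'a::zero mps \<Rightarrow> 'a mps" where
  "hom_part d g = Abs_mps (\<lambda>m. if mdeg m = d then coeff_mps g m else 0)"

text \<open>formal derivative d/dy of a polynomial over an arbitrary commutative ring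
  (the library's pderiv requires absence of zero divisors)\<close>
definition yderiv :: "'a::comm_ring_1 poly \<Rightarrow> 'a poly" where
  "yderiv f = (\<Sum>i<degree f. monom (of_nat (Suc i) * coeff f (Suc i)) i)"

text \<open>y-discriminant of a monic polynomial f of degree n:
  (-1)^(n(n-1)/2) Res_y(f, df/dy)  (for monic f the leading coefficient is 1)\<close>
definition y_disc :: "'a::comm_ring_1 poly \<Rightarrow> 'a" where
  "y_disc f = (-1) ^ (degree f * (degree f - 1) div 2) * resultant f (yderiv f)"

definition prepared :: "'a::comm_ring_1 mps poly \<Rightarrow> bool" where
  "prepared f \<longleftrightarrow>
     (let \<Delta> = y_disc f; a = (LEAST d. hom_part d \<Delta> \<noteq> 0) in
       (\<exists>d. hom_part d \<Delta> \<noteq> 0) \<and> coeff_mps (hom_part a \<Delta>) (Poly_Mapping.single 1 a) \<noteq> 0)"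

text \<open>the substitution g(x_1,...,x_e) \<mapsto> g(X_1, X_2 X_1, ..., X_e X_1), written
  coefficientwise: the monomial x^beta goes to X_1^(beta_1+...+beta_e) X_2^beta_2 ... X_e^beta_e\<close>
definition blowup :: "nat \<Rightarrow> 'a::zero mps \<Rightarrow> 'a mps" where
  "blowup e g = Abs_mps (\<lambda>m.
     let s = (\<Sum>i\<in>{2..e}. Poly_Mapping.lookup m i) in
     if s \<le> Poly_Mapping.lookup m 1 then coeff_mps g (m - Poly_Mapping.single 1 s) else 0)"

definition quasi_ordinary :: "nat \<Rightarrow> 'a::comm_ring_1 mps poly \<Rightarrow> bool" where
  "quasi_ordinary e F \<longleftrightarrow> poly_over_series e F \<and> lead_coeff F = 1 \<and>
     (\<exists>\<alpha> \<epsilon>. Poly_Mapping.keys \<alpha> \<subseteq> {1..e} \<and> series_in e \<epsilon> \<and>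
        (\<exists>\<delta>. series_in e \<delta> \<and> \<epsilon> * \<delta> = 1) \<and>
        y_disc F = mono_mps \<alpha> * \<epsilon>)"

end

theory Submission
  imports Defs
begin

lemma prod_fun_dv:
  fixes f g :: "(nat \<Rightarrow>\<^sub>0 nat) \<Rightarrow> 'a::semiring_0"
  shows "prod_fun f g k = (\<Sum>l\<in>dv k. f l * g (k - l))"
proof -
  have inner: "(\<Sum>q. (g q when k = l + q)) = (if l \<in> dv k then g (k - l) else 0)" for l
  proof (cases "l \<in> dv k")
    case True
    then obtain q0 where q0: "l + q0 = k" by (auto simp: dv_def)
    have eq: "(\<lambda>q. (g q when k = l + q)) = (\<lambda>q. (g (k - l) when q = k - l))"
      using q0 by (auto simp: fun_eq_iff when_def)
    show ?thesis using True by (subst eq) simp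
  next
    case False
    have eq: "(\<lambda>q. (g q when k = l + q)) = (\<lambda>q. 0)" using False by (auto simp: fun_eq_iff when_def dv_def)
    show ?thesis using False by (subst eq) simp
  qed
  have "prod_fun f g k = (\<Sum>l. f l * (if l \<in> dv k then g (k - l) else 0))"
    unfolding prod_fun_def inner ..
  also have "\<dots> = (\<Sum>l\<in>dv k. f l * (if l \<in> dv k then g (k - l) else 0))"
    by (rule Sum_any.expand_superset) (auto simp: finite_dv)
  also have "\<dots> = (\<Sum>l\<in>dv k. f l * g (k - l))" by simp
  finally show ?thesis .
qed

lemma coeff_mps_times: "coeff_mps (a * b) m = (\<Sum>l\<in>dv m. coeff_mps a l * coeff_mps b (m - l))"
  by (simp add: times_mps.rep_eq prod_fun_dv)

lemma coeff_mps_plus: "coeff_mps (a + b) m = coeff_mps a m + coeff_mps b m"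
  by (simp add: plus_mps.rep_eq)

lemma coeff_mps_one: "coeff_mps 1 m = (if m = 0 then 1 else 0)"
  by (simp add: one_mps.rep_eq when_def)

lemma coeff_mps_zero: "coeff_mps 0 m = 0"
  by (simp add: zero_mps.rep_eq)

lemma dv_diff: "p \<in> dv m \<Longrightarrow> p + (m - p) = m"
  by (auto simp: dv_def)

definition mmap :: "((nat \<Rightarrow>\<^sub>0 nat) \<Rightarrow> (nat \<Rightarrow>\<^sub>0 nat)) \<Rightarrow> ((nat \<Rightarrow>\<^sub>0 nat) \<Rightarrow> 'a::comm_ring_1) \<Rightarrow> 'a mps \<Rightarrow> 'a mps" where
  "mmap \<psi> w g = Abs_mps (\<lambda>m. if m \<in> range \<psi> then w (inv_into UNIV \<psi> m) * coeff_mps g (inv_into UNIV \<psi> m) else 0)"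

locale mmap_ok =
  fixes \<psi> :: "(nat \<Rightarrow>\<^sub>0 nat) \<Rightarrow> (nat \<Rightarrow>\<^sub>0 nat)" and w :: "(nat \<Rightarrow>\<^sub>0 nat) \<Rightarrow> 'a::comm_ring_1"
  assumes phi_add: "\<And>a b. \<psi> (a + b) = \<psi> a + \<psi> b"
    and phi_inj: "inj \<psi>"
    and chi_add: "\<And>a b. w (a + b) = w a * w b"
    and chi_0: "w 0 = 1"
begin

lemma phi_0: "\<psi> 0 = 0"
  using phi_add[of 0 0] by simp

lemma coeff_img: "coeff_mps (mmap \<psi> w g) (\<psi> k) = w k * coeff_mps g k"
  by (simp add: mmap_def Abs_mps_inverse phi_inj)

lemma coeff_notimg: "m \<notin> range \<psi> \<Longrightarrow> coeff_mps (mmap \<psi> w g) m = 0"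
  by (simp add: mmap_def Abs_mps_inverse)

lemma Z:
  assumes "p \<in> dv m" "coeff_mps (mmap \<psi> w g) p * coeff_mps (mmap \<psi> w h) (m - p) \<noteq> 0"
  shows "\<exists>l l'. p = \<psi> l \<and> m - p = \<psi> l' \<and> m = \<psi> (l + l')"
proof -
  have "p \<in> range \<psi>" using assms(2) coeff_notimg by fastforce
  moreover have "m - p \<in> range \<psi>" using assms(2) coeff_notimg by fastforce
  ultimately obtain l l' where "p = \<psi> l" "m - p = \<psi> l'" by blast
  moreover have "m = p + (m - p)" using dv_diff[OF assms(1)] by simp
  ultimately show ?thesis using phi_add by metis
qed

lemma mm_mult: "mmap \<psi> w (g * h) = mmap \<psi> w g * mmap \<psi> w h"
proof (rule coeff_mps_inject[THEN iffD1], rule ext)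
  fix m
  let ?G = "mmap \<psi> w g" and ?H = "mmap \<psi> w h"
  show "coeff_mps (mmap \<psi> w (g * h)) m = coeff_mps (?G * ?H) m"
  proof (cases "m \<in> range \<psi>")
    case True
    then obtain k where k: "m = \<psi> k" by blast
    have sub: "\<psi> ` dv k \<subseteq> dv m"
      using k phi_add by (auto simp: dv_def)
    have "coeff_mps (?G * ?H) m = (\<Sum>p\<in>dv m. coeff_mps ?G p * coeff_mps ?H (m - p))"
      by (rule coeff_mps_times)
    also have "\<dots> = (\<Sum>p\<in>\<psi> ` dv k. coeff_mps ?G p * coeff_mps ?H (m - p))"
    proof (rule sum.mono_neutral_right[OF finite_dv sub], rule ballI, rule ccontr)
      fix p assume p: "p \<in> dv m - \<psi> ` dv k"
        and ne: "coeff_mps ?G p * coeff_mps ?H (m - p) \<noteq> 0"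
      then obtain l l' where ll: "p = \<psi> l" "m = \<psi> (l + l')" using Z by blast
      then have "k = l + l'" using k phi_inj by (simp add: inj_eq)
      then show False using p ll by (auto simp: dv_def)
    qed
    also have "\<dots> = (\<Sum>l\<in>dv k. coeff_mps ?G (\<psi> l) * coeff_mps ?H (m - \<psi> l))"
      by (rule sum.reindex_cong[of \<psi>]) (auto intro: inj_on_subset[OF phi_inj])
    also have "\<dots> = (\<Sum>l\<in>dv k. w k * (coeff_mps g l * coeff_mps h (k - l)))"
    proof (rule sum.cong[OF refl])
      fix l assume l: "l \<in> dv k"
      have "m - \<psi> l = \<psi> (k - l)"
        using k phi_add[of l "k - l"] dv_diff[OF l] by (metis add_diff_cancel_left')
      moreover have "w k = w l * w (k - l)" using chi_add[of l "k - l"] dv_diff[OF l] by simp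
      ultimately show "coeff_mps ?G (\<psi> l) * coeff_mps ?H (m - \<psi> l) = w k * (coeff_mps g l * coeff_mps h (k - l))"
        by (simp add: coeff_img algebra_simps)
    qed
    also have "\<dots> = coeff_mps (mmap \<psi> w (g * h)) m"
      by (simp add: k coeff_img coeff_mps_times sum_distrib_left)
    finally show ?thesis ..
  next
    case False
    have "coeff_mps (?G * ?H) m = (\<Sum>p\<in>dv m. coeff_mps ?G p * coeff_mps ?H (m - p))"
      by (rule coeff_mps_times)
    also have "\<dots> = 0"
    proof (rule sum.neutral, rule ballI, rule ccontr)
      fix p assume "p \<in> dv m" "coeff_mps ?G p * coeff_mps ?H (m - p) \<noteq> 0"
      then show False using Z False by blast
    qed
    finally show ?thesis using False coeff_notimg by simp
  qed
qed

lemma mm_add: "mmap \<psi> w (g + h) = mmap \<psi> w g + mmap \<psi> w h"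
  by (rule coeff_mps_inject[THEN iffD1]) (auto simp: mmap_def Abs_mps_inverse plus_mps.rep_eq algebra_simps)

lemma mm_one: "mmap \<psi> w 1 = 1"
proof (rule coeff_mps_inject[THEN iffD1], rule ext)
  fix m
  show "coeff_mps (mmap \<psi> w 1) m = coeff_mps 1 m"
  proof (cases "m \<in> range \<psi>")
    case True
    then obtain k where k: "m = \<psi> k" by blast
    have "m = 0 \<longleftrightarrow> k = 0" using k phi_0 phi_inj by (metis injD)
    then show ?thesis using k by (simp add: coeff_img coeff_mps_one chi_0)
  next
    case False
    then have "m \<noteq> 0" using phi_0 by (metis rangeI)
    then show ?thesis using False by (simp add: coeff_notimg coeff_mps_one)
  qed
qed

sublocale comm_ring_hom "mmap \<psi> w"
proof
  show "mmap \<psi> w 1 = 1" by (rule mm_one)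
  fix x y
  show "mmap \<psi> w (x * y) = mmap \<psi> w x * mmap \<psi> w y" by (rule mm_mult)
  show "mmap \<psi> w (x + y) = mmap \<psi> w x + mmap \<psi> w y" by (rule mm_add)
next
  show "mmap \<psi> w 0 = 0"
    by (rule coeff_mps_inject[THEN iffD1]) (auto simp: mmap_def Abs_mps_inverse zero_mps.rep_eq)
qed

end


lemma keys_add_nat: "Poly_Mapping.keys ((a::nat \<Rightarrow>\<^sub>0 nat) + b) = Poly_Mapping.keys a \<union> Poly_Mapping.keys b"
  by (auto simp: in_keys_iff lookup_add)

definition sfun :: "nat \<Rightarrow> (nat \<Rightarrow>\<^sub>0 nat) \<Rightarrow> nat" where
  "sfun e m = (\<Sum>i\<in>{2..e}. Poly_Mapping.lookup m i)"

definition bphi :: "nat \<Rightarrow> (nat \<Rightarrow>\<^sub>0 nat) \<Rightarrow> (nat \<Rightarrow>\<^sub>0 nat)" where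
  "bphi e l = l + Poly_Mapping.single 1 (sfun e l)"

lemma sfun_add: "sfun e (a + b) = sfun e a + sfun e b"
  by (simp add: sfun_def lookup_add sum.distrib)

lemma sfun_single1: "sfun e (Poly_Mapping.single 1 k) = 0"
  by (simp add: sfun_def lookup_single)

lemma sfun_bphi: "sfun e (bphi e l) = sfun e l"
  unfolding bphi_def sfun_add sfun_single1 by simp

lemma bphi_add: "bphi e (a + b) = bphi e a + bphi e b"
  by (simp add: bphi_def sfun_add single_add algebra_simps)

lemma bphi_inj: "inj (bphi e)"
proof (rule injI)
  fix a b assume h: "bphi e a = bphi e b"
  then have "sfun e a = sfun e b" using sfun_bphi by metis
  then show "a = b" using h by (simp add: bphi_def)
qed

lemma range_bphi: "m \<in> range (bphi e) \<longleftrightarrow> sfun e m \<le> Poly_Mapping.lookup m 1"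
proof
  assume "m \<in> range (bphi e)"
  then obtain l where l: "m = bphi e l" by blast
  then show "sfun e m \<le> Poly_Mapping.lookup m 1"
    by (simp add: sfun_bphi) (simp add: bphi_def lookup_add)
next
  assume h: "sfun e m \<le> Poly_Mapping.lookup m 1"
  let ?l = "m - Poly_Mapping.single 1 (sfun e m)"
  have s: "sfun e ?l = sfun e m" by (simp add: sfun_def lookup_minus lookup_single)
  have "bphi e ?l = m"
    unfolding bphi_def s using h
    by (intro poly_mapping_eqI) (auto simp: lookup_add lookup_minus lookup_single when_def)
  then show "m \<in> range (bphi e)" by (metis rangeI)
qed

lemma inv_bphi: "sfun e m \<le> Poly_Mapping.lookup m 1 \<Longrightarrow>
   inv_into UNIV (bphi e) m = m - Poly_Mapping.single 1 (sfun e m)"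
proof -
  assume h: "sfun e m \<le> Poly_Mapping.lookup m 1"
  let ?l = "m - Poly_Mapping.single 1 (sfun e m)"
  have s: "sfun e ?l = sfun e m" by (simp add: sfun_def lookup_minus lookup_single)
  have "bphi e ?l = m"
    unfolding bphi_def s using h
    by (intro poly_mapping_eqI) (auto simp: lookup_add lookup_minus lookup_single when_def)
  then show ?thesis using bphi_inj by (metis inv_f_f)
qed

interpretation bl: mmap_ok "bphi e" "\<lambda>_. 1"
  by unfold_locales (auto simp: bphi_add bphi_inj)

lemma blowup_mmap: "blowup e = mmap (bphi e) (\<lambda>_. 1)"
proof (rule ext)
  fix g :: "'a::comm_ring_1 mps"
  show "blowup e g = mmap (bphi e) (\<lambda>_. 1) g"
    unfolding blowup_def mmap_def Let_def
    by (rule arg_cong[where f=Abs_mps]) (auto simp: range_bphi inv_bphi sfun_def[symmetric])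
qed

definition rchi :: "nat \<Rightarrow> (nat \<Rightarrow>\<^sub>0 nat) \<Rightarrow> 'a::comm_ring_1" where
  "rchi e m = (if Poly_Mapping.keys m \<subseteq> {1..e} then 1 else 0)"

interpretation rs: mmap_ok "id" "rchi e"
  by unfold_locales (auto simp: rchi_def keys_add_nat)

lemma series_in_restr: "series_in e g \<longleftrightarrow> mmap id (rchi e) g = g"
proof
  assume "series_in e g"
  then show "mmap id (rchi e) g = g"
    by (intro coeff_mps_inject[THEN iffD1] ext) (auto simp: mmap_def Abs_mps_inverse rchi_def series_in_def)
next
  assume h: "mmap id (rchi e) g = g"
  show "series_in e g" unfolding series_in_def
  proof (intro allI impI)
    fix m assume "coeff_mps g m \<noteq> 0"
    then have "coeff_mps (mmap id (rchi e) g) m \<noteq> 0" using h by simp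
    then show "Poly_Mapping.keys m \<subseteq> {1..e}"
      by (simp add: mmap_def Abs_mps_inverse rchi_def split: if_splits)
  qed
qed

lemma coeff_yderiv: "coeff (yderiv f) i = of_nat (Suc i) * coeff f (Suc i)"
proof -
  have "coeff (yderiv f) i = (\<Sum>j<degree f. if j = i then of_nat (Suc j) * coeff f (Suc j) else 0)"
    by (simp add: yderiv_def coeff_sum coeff_monom)
  also have "\<dots> = of_nat (Suc i) * coeff f (Suc i)"
    by (cases "i < degree f") (auto simp: coeff_eq_0)
  finally show ?thesis .
qed

lemma (in comm_ring_hom) map_yderiv: "map_poly hom (yderiv f) = yderiv (map_poly hom f)"
  by (rule poly_eqI) (simp add: coeff_yderiv coeff_map_poly hom_distribs)

lemma (in comm_ring_hom) y_disc_map: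
  assumes "degree (map_poly hom f) = degree f" "degree (map_poly hom (yderiv f)) = degree (yderiv f)"
  shows "y_disc (map_poly hom f) = hom (y_disc f)"
proof -
  have "resultant (map_poly hom f) (map_poly hom (yderiv f)) = hom (resultant f (yderiv f))"
    by (rule resultant_map_poly[OF assms])
  then show ?thesis
    unfolding y_disc_def assms(1) map_yderiv[symmetric] by (simp add: hom_distribs)
qed


lemma mdeg_add: "mdeg (a + b) = mdeg a + mdeg b"
proof -
  have fin: "finite (Poly_Mapping.keys a \<union> Poly_Mapping.keys b)" by simp
  have "mdeg (a + b) = (\<Sum>i\<in>Poly_Mapping.keys a \<union> Poly_Mapping.keys b. Poly_Mapping.lookup a i + Poly_Mapping.lookup b i)"
    by (simp add: mdeg_def keys_add_nat lookup_add)
  also have "\<dots> = (\<Sum>i\<in>Poly_Mapping.keys a \<union> Poly_Mapping.keys b. Poly_Mapping.lookup a i) +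
      (\<Sum>i\<in>Poly_Mapping.keys a \<union> Poly_Mapping.keys b. Poly_Mapping.lookup b i)"
    by (rule sum.distrib)
  also have "(\<Sum>i\<in>Poly_Mapping.keys a \<union> Poly_Mapping.keys b. Poly_Mapping.lookup a i) = mdeg a"
    unfolding mdeg_def by (rule sum.mono_neutral_right[OF fin]) (auto simp: in_keys_iff)
  also have "(\<Sum>i\<in>Poly_Mapping.keys a \<union> Poly_Mapping.keys b. Poly_Mapping.lookup b i) = mdeg b"
    unfolding mdeg_def by (rule sum.mono_neutral_right[OF fin]) (auto simp: in_keys_iff)
  finally show ?thesis .
qed

lemma mdeg_pos: "p \<noteq> 0 \<Longrightarrow> 0 < mdeg p"
proof -
  assume "p \<noteq> 0"
  then obtain i where i: "i \<in> Poly_Mapping.keys p" by (metis all_not_in_conv keys_eq_empty)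
  have "0 < Poly_Mapping.lookup p i" using i by (simp add: in_keys_iff)
  also have "\<dots> \<le> mdeg p" unfolding mdeg_def by (rule member_le_sum[OF i]) auto
  finally show ?thesis .
qed

lemma mdeg_dv_less: "p \<in> dv m \<Longrightarrow> p \<noteq> 0 \<Longrightarrow> mdeg (m - p) < mdeg m"
  using mdeg_add[of p "m - p"] dv_diff[of p m] mdeg_pos[of p] by simp

function invc :: "((nat \<Rightarrow>\<^sub>0 nat) \<Rightarrow> 'a::field) \<Rightarrow> (nat \<Rightarrow>\<^sub>0 nat) \<Rightarrow> 'a" where
  "invc g m = (if m = 0 then inverse (g 0)
     else - inverse (g 0) * (\<Sum>p\<in>dv m - {0}. g p * invc g (m - p)))"
  by auto
termination
  by (relation "measure (\<lambda>(g, m). mdeg m)") (auto intro: mdeg_dv_less)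

declare invc.simps[simp del]

lemma pm_add_eq_0: "(x::nat \<Rightarrow>\<^sub>0 nat) + q = 0 \<Longrightarrow> x = 0"
  by (rule poly_mapping_eqI) (metis add_is_0 lookup_add lookup_zero)

lemma dv_zero: "dv 0 = {0}"
  by (auto simp: dv_def pm_add_eq_0)

lemma zero_dv: "0 \<in> dv m"
  by (auto simp: dv_def)

lemma mps_inverse:
  fixes \<epsilon> :: "'a::field mps"
  assumes "coeff_mps \<epsilon> 0 \<noteq> 0"
  shows "\<epsilon> * Abs_mps (invc (coeff_mps \<epsilon>)) = 1"
proof (rule coeff_mps_inject[THEN iffD1], rule ext)
  fix m
  let ?g = "coeff_mps \<epsilon>"
  have "coeff_mps (\<epsilon> * Abs_mps (invc ?g)) m = (\<Sum>p\<in>dv m. ?g p * invc ?g (m - p))"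
    by (simp add: coeff_mps_times Abs_mps_inverse)
  also have "\<dots> = coeff_mps 1 m"
  proof (cases "m = 0")
    case True
    then show ?thesis using assms by (simp add: dv_zero coeff_mps_one invc.simps)
  next
    case False
    have "(\<Sum>p\<in>dv m. ?g p * invc ?g (m - p)) = ?g 0 * invc ?g m + (\<Sum>p\<in>dv m - {0}. ?g p * invc ?g (m - p))"
      by (subst sum.remove[OF finite_dv zero_dv]) simp
    also have "\<dots> = 0"
      using False assms by (subst invc.simps[of _ m]) (simp add: field_simps)
    finally show ?thesis using False by (simp add: coeff_mps_one)
  qed
  finally show "coeff_mps (\<epsilon> * Abs_mps (invc ?g)) m = coeff_mps 1 m" .
qed


lemma coeff_hom_part: "coeff_mps (hom_part d g) m = (if mdeg m = d then coeff_mps g m else 0)"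
  by (simp add: hom_part_def Abs_mps_inverse)

lemma coeff_mono_mps: "coeff_mps (mono_mps \<alpha> :: 'a::comm_ring_1 mps) p = (if p = \<alpha> then 1 else 0)"
  by (simp add: mono_mps_def Abs_mps_inverse)

lemma mdeg_single: "mdeg (Poly_Mapping.single i k) = k"
  by (cases "k = 0") (auto simp: mdeg_def)

lemma mdeg_split:
  assumes "Poly_Mapping.keys l \<subseteq> {1..e}" "1 \<le> e"
  shows "mdeg l = Poly_Mapping.lookup l 1 + sfun e l"
proof -
  have "mdeg l = (\<Sum>i\<in>{1..e}. Poly_Mapping.lookup l i)"
    unfolding mdeg_def by (rule sum.mono_neutral_left) (use assms in \<open>auto simp: in_keys_iff\<close>)
  also have "\<dots> = Poly_Mapping.lookup l 1 + (\<Sum>i\<in>{Suc 1..e}. Poly_Mapping.lookup l i)"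
    using assms(2) by (subst sum.atLeast_Suc_atMost) auto
  finally show ?thesis by (simp add: sfun_def numeral_2_eq_2)
qed

lemma series_in_blowup:
  assumes "series_in e g" "1 \<le> e"
  shows "series_in e (mmap (bphi e) (\<lambda>_. 1) g)"
  unfolding series_in_def
proof (intro allI impI)
  fix m assume h: "coeff_mps (mmap (bphi e) (\<lambda>_. 1) g) m \<noteq> 0"
  then have "m \<in> range (bphi e)" using bl.coeff_notimg by blast
  then obtain l where l: "m = bphi e l" by blast
  then have "coeff_mps g l \<noteq> 0" using h bl.coeff_img[of e g l] by simp
  then have "Poly_Mapping.keys l \<subseteq> {1..e}" using assms(1) by (simp add: series_in_def)
  moreover have "Poly_Mapping.keys (Poly_Mapping.single 1 (sfun e l)) \<subseteq> {1..e}" using assms(2) by auto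
  ultimately show "Poly_Mapping.keys m \<subseteq> {1..e}" unfolding l bphi_def keys_add_nat by blast
qed

lemma series_in_restr_img: "series_in e (mmap id (rchi e) g)"
  unfolding series_in_def
  by (auto simp: mmap_def Abs_mps_inverse rchi_def split: if_splits)

theorem mainTheorem15:
  fixes f :: "'a::{alg_closed_field, field_char_0} mps poly" and e n :: nat
  assumes "1 \<le> e"
    and "poly_over_series e f"
    and "lead_coeff f = 1"
    and "degree f = n"
    and "prepared f"
  shows "quasi_ordinary e (map_poly (blowup e) f)"
proof -
  let ?B = "mmap (bphi e) (\<lambda>_. 1) :: 'a mps \<Rightarrow> 'a mps"
  let ?R = "mmap id (rchi e) :: 'a mps \<Rightarrow> 'a mps"
  define \<Delta> where "\<Delta> = y_disc f"
  have Rf: "map_poly ?R f = f"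
    by (rule poly_eqI) (use assms(2) in \<open>simp add: coeff_map_poly poly_over_series_def series_in_restr\<close>)
  have "y_disc (map_poly ?R f) = ?R (y_disc f)"
    by (rule rs.y_disc_map) (simp_all add: Rf rs.map_yderiv)
  then have ser\<Delta>: "series_in e \<Delta>" unfolding \<Delta>_def Rf series_in_restr by simp
  have Binj: "?B x = 0 \<Longrightarrow> x = 0" for x
  proof (rule coeff_mps_inject[THEN iffD1], rule ext)
    fix k assume "?B x = 0"
    then have "coeff_mps (?B x) (bphi e k) = 0" by (simp add: coeff_mps_zero)
    then show "coeff_mps x k = coeff_mps 0 k" by (simp add: bl.coeff_img coeff_mps_zero)
  qed
  have degF: "degree (map_poly ?B f) = degree f"
    by (rule Polynomial.degree_map_poly) (metis Binj)
  have degF': "degree (map_poly ?B (yderiv f)) = degree (yderiv f)"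
    by (rule Polynomial.degree_map_poly) (metis Binj)
  have discF: "y_disc (map_poly ?B f) = ?B \<Delta>"
    unfolding \<Delta>_def by (rule bl.y_disc_map[OF degF degF'])
  have serB\<Delta>: "series_in e (?B \<Delta>)" by (rule series_in_blowup[OF ser\<Delta> assms(1)])
  define a where "a = (LEAST d. hom_part d \<Delta> \<noteq> 0)"
  define \<alpha> where "\<alpha> = Poly_Mapping.single (1::nat) a"
  have ca: "coeff_mps (hom_part a \<Delta>) \<alpha> \<noteq> 0"
    using assms(5) unfolding prepared_def Let_def \<Delta>_def[symmetric] a_def[symmetric] \<alpha>_def by blast
  then have c\<alpha>: "coeff_mps \<Delta> \<alpha> \<noteq> 0" by (simp add: coeff_hom_part split: if_splits)
  have amin: "a \<le> mdeg m" if "coeff_mps \<Delta> m \<noteq> 0" for m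
  proof -
    have "coeff_mps (hom_part (mdeg m) \<Delta>) m \<noteq> 0" using that by (simp add: coeff_hom_part)
    then have "hom_part (mdeg m) \<Delta> \<noteq> 0" by (auto simp: coeff_mps_zero)
    then show ?thesis unfolding a_def by (rule Least_le)
  qed
  define \<epsilon> where "\<epsilon> = Abs_mps (\<lambda>m. coeff_mps (?B \<Delta>) (m + \<alpha>))"
  have c\<epsilon>: "coeff_mps \<epsilon> m = coeff_mps (?B \<Delta>) (m + \<alpha>)" for m
    by (simp add: \<epsilon>_def Abs_mps_inverse)
  have bphi\<alpha>: "bphi e \<alpha> = \<alpha>"
    unfolding bphi_def \<alpha>_def sfun_single1 by simp
  have \<epsilon>0: "coeff_mps \<epsilon> 0 \<noteq> 0"
    using c\<alpha> bl.coeff_img[of e \<Delta> \<alpha>] by (simp add: c\<epsilon> bphi\<alpha>)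
  have ser\<epsilon>: "series_in e \<epsilon>"
    unfolding series_in_def
  proof (intro allI impI)
    fix m assume "coeff_mps \<epsilon> m \<noteq> 0"
    then have "Poly_Mapping.keys (m + \<alpha>) \<subseteq> {1..e}" using serB\<Delta> by (simp add: c\<epsilon> series_in_def)
    then show "Poly_Mapping.keys m \<subseteq> {1..e}" by (simp add: keys_add_nat)
  qed
  have fact: "?B \<Delta> = mono_mps \<alpha> * \<epsilon>"
  proof (rule coeff_mps_inject[THEN iffD1], rule ext)
    fix m
    have "coeff_mps (mono_mps \<alpha> * \<epsilon>) m = (\<Sum>p\<in>dv m. (if p = \<alpha> then 1 else 0) * coeff_mps \<epsilon> (m - p))"
      by (simp add: coeff_mps_times coeff_mono_mps)
    also have "\<dots> = (if \<alpha> \<in> dv m then coeff_mps \<epsilon> (m - \<alpha>) else 0)"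
      by (simp add: if_distrib[of "\<lambda>x. x * _"] sum.delta[OF finite_dv] cong: if_cong)
    also have "\<dots> = coeff_mps (?B \<Delta>) m"
    proof (cases "\<alpha> \<in> dv m")
      case True
      then show ?thesis using dv_diff[OF True] by (simp add: c\<epsilon> add.commute)
    next
      case False
      show ?thesis
      proof (rule ccontr)
        assume h: "(if \<alpha> \<in> dv m then coeff_mps \<epsilon> (m - \<alpha>) else 0) \<noteq> coeff_mps (?B \<Delta>) m"
        then have ne: "coeff_mps (?B \<Delta>) m \<noteq> 0" using False by simp
        then have "m \<in> range (bphi e)" using bl.coeff_notimg by blast
        then obtain l where l: "m = bphi e l" by blast
        then have cl: "coeff_mps \<Delta> l \<noteq> 0" using ne bl.coeff_img[of e \<Delta> l] by simp
        then have kl: "Poly_Mapping.keys l \<subseteq> {1..e}" using ser\<Delta> by (simp add: series_in_def)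
        have "a \<le> mdeg l" by (rule amin[OF cl])
        also have "\<dots> = Poly_Mapping.lookup m 1"
          using mdeg_split[OF kl assms(1)] l by (simp add: bphi_def lookup_add)
        finally have "a \<le> Poly_Mapping.lookup m 1" .
        then have "m = \<alpha> + (m - \<alpha>)"
          by (intro poly_mapping_eqI) (auto simp: \<alpha>_def lookup_add lookup_minus lookup_single when_def)
        then have "\<alpha> \<in> dv m" by (metis dv_left)
        then show False using False by blast
      qed
    qed
    finally show "coeff_mps (?B \<Delta>) m = coeff_mps (mono_mps \<alpha> * \<epsilon>) m" by simp
  qed
  define \<delta> where "\<delta> = ?R (Abs_mps (invc (coeff_mps \<epsilon>)))"
  have ser\<delta>: "series_in e \<delta>" unfolding \<delta>_def by (rule series_in_restr_img)
  have "\<epsilon> * \<delta> = ?R \<epsilon> * \<delta>" using ser\<epsilon> series_in_restr by metis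
  also have "\<dots> = ?R (\<epsilon> * Abs_mps (invc (coeff_mps \<epsilon>)))" unfolding \<delta>_def by (simp add: rs.hom_mult)
  also have "\<dots> = 1" using mps_inverse[OF \<epsilon>0] by simp
  finally have unit: "\<epsilon> * \<delta> = 1" .
  have key\<alpha>: "Poly_Mapping.keys \<alpha> \<subseteq> {1..e}" using assms(1) by (simp add: \<alpha>_def)
  have pos: "poly_over_series e (map_poly ?B f)"
    unfolding poly_over_series_def
  proof
    fix i
    have "series_in e (coeff f i)" using assms(2) poly_over_series_def by blast
    then have "series_in e (?B (coeff f i))" by (rule series_in_blowup[OF _ assms(1)])
    then show "series_in e (coeff (map_poly ?B f) i)" by (simp add: coeff_map_poly)
  qed
  have lc: "lead_coeff (map_poly ?B f) = 1"
    by (simp add: degF coeff_map_poly assms(3))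
  show ?thesis
    unfolding quasi_ordinary_def blowup_mmap
  proof (intro conjI exI)
    show "poly_over_series e (map_poly ?B f)" by (rule pos)
    show "lead_coeff (map_poly ?B f) = 1" by (rule lc)
    show "Poly_Mapping.keys \<alpha> \<subseteq> {1..e}" by (rule key\<alpha>)
    show "series_in e \<epsilon>" by (rule ser\<epsilon>)
    show "series_in e \<delta>" by (rule ser\<delta>)
    show "\<epsilon> * \<delta> = 1" by (rule unit)
    show "y_disc (map_poly ?B f) = mono_mps \<alpha> * \<epsilon>" by (simp only: discF fact)
  qed
qed

end
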